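(* Let $M^3$ be a closed orientable $3$-manifold and let $g_1=(f_1,f_2)\colon M^3\to\mathbb{R}^2$ be a stable map which has an immersion lift $\widetilde{g_1}=(f_1,f_2,f_3,f_4)\colon M^3\to\mathbb{R}^4$ (i.e. $\widetilde{g_1}$ is an immersion). Then the map \[G=(f_1,f_2,f_3,f_4,f_1,-f_2)\colon M^3\to\mathbb{R}^6=\mathbb{C}^3\] is a smooth immersion of $M^3$ into $\mathbb{C}^3$ whose set of complex tangents coincides with the singular set $S(g_1)$ of $g_1$.
   Context: $\mathbb{R}^6$ is identified with $\mathbb{C}^3$ via $(x_1,y_1,x_2,y_2,x_3,y_3)\mapsto(x_1+iy_1,x_2+iy_2,x_3+iy_3)$. For an immersion $F\colon M^3\to\mathbb{C}^3$, a point $x$ is a complex tangent if $dF_x(T_xM^3)$ contains a complex line. For a smooth map $g\colon M\to N$, the singular set is $S(g)=\{p\in M:\operatorname{rank} dg_p<\min(\dim M,\dim N)\}$. A smooth map $g\colon M^3\to\mathbb{R}^2$ is a stable map if (I) around every point $p$ there are local coordinates $(x,y,z)$ centred at $p$ and $(X,Y)$ centred at $g(p)$ in which $g$ has one of the forms $(x,y)$ (regular point), $(x,y^2+z^2)$ (definite fold), $(x,y^2-z^2)$ (indefinite fold), $(x,xy+y^3+z^2)$ (cusp); and (II) for each cusp point $p$, $g^{-1}(g(p))\cap S(g)=\{p\}$, and $g$ restricted to $S(g)$ minus the cusp points is an immersion with normal crossings. *)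

theory Defs
  imports "HOL-Analysis.Analysis"
begin

fun Ck :: "nat \<Rightarrow> 'a::real_normed_vector set \<Rightarrow> ('a \<Rightarrow> 'b::real_normed_vector) \<Rightarrow> bool" where
  "Ck 0 S f = continuous_on S f"
| "Ck (Suc k) S f = ((\<forall>x\<in>S. f differentiable (at x)) \<and>
      (\<forall>v. Ck k S (\<lambda>x. frechet_derivative f (at x) v)))"

definition smooth_on :: "'a::real_normed_vector set \<Rightarrow> ('a \<Rightarrow> 'b::real_normed_vector) \<Rightarrow> bool" where
  "smooth_on S f \<longleftrightarrow> open S \<and> (\<forall>k. Ck k S f)"

definition diffeo :: "'a::real_normed_vector set \<Rightarrow> 'a set \<Rightarrow> ('a \<Rightarrow> 'a) \<Rightarrow> bool" where
  "diffeo V W h \<longleftrightarrow> open V \<and> open W \<and> h ` V = W \<and> smooth_on V h \<and>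
     (\<exists>h'. smooth_on W h' \<and> (\<forall>x\<in>V. h' (h x) = x) \<and> (\<forall>y\<in>W. h (h' y) = y))"

definition local_param :: "'n::euclidean_space set \<Rightarrow> (real^3) set \<Rightarrow> (real^3 \<Rightarrow> 'n) \<Rightarrow> bool" where
  "local_param M U \<phi> \<longleftrightarrow> open U \<and> smooth_on U \<phi> \<and>
     (\<forall>u\<in>U. inj (frechet_derivative \<phi> (at u))) \<and>
     (\<exists>\<psi>. homeomorphism U (\<phi> ` U) \<phi> \<psi>) \<and>
     (\<exists>W. open W \<and> \<phi> ` U = M \<inter> W)"

definition manifold3 :: "'n::euclidean_space set \<Rightarrow> bool" where
  "manifold3 M \<longleftrightarrow> (\<forall>p\<in>M. \<exists>U \<phi>. local_param M U \<phi> \<and> p \<in> \<phi> ` U)"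

text \<open>Closed (compact, without boundary) 3-manifold.\<close>
definition closed_manifold3 :: "'n::euclidean_space set \<Rightarrow> bool" where
  "closed_manifold3 M \<longleftrightarrow> manifold3 M \<and> compact M"

definition orientable3 :: "'n::euclidean_space set \<Rightarrow> bool" where
  "orientable3 M \<longleftrightarrow> (\<exists>A. (\<forall>(U,\<phi>)\<in>A. local_param M U \<phi>) \<and>
     (\<forall>p\<in>M. \<exists>(U,\<phi>)\<in>A. p \<in> \<phi> ` U) \<and>
     (\<forall>(U1,\<phi>1)\<in>A. \<forall>(U2,\<phi>2)\<in>A. \<forall>u1\<in>U1. \<forall>u2\<in>U2. \<phi>1 u1 = \<phi>2 u2 \<longrightarrow>
        det (matrix (frechet_derivative (inv_into U2 \<phi>2 \<circ> \<phi>1) (at u1))) > 0))"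

definition smooth_map :: "'n::euclidean_space set \<Rightarrow> ('n \<Rightarrow> 'b::real_normed_vector) \<Rightarrow> bool" where
  "smooth_map M f \<longleftrightarrow> (\<forall>U \<phi>. local_param M U \<phi> \<longrightarrow> smooth_on U (f \<circ> \<phi>))"

definition immersion :: "'n::euclidean_space set \<Rightarrow> ('n \<Rightarrow> 'b::real_normed_vector) \<Rightarrow> bool" where
  "immersion M f \<longleftrightarrow> smooth_map M f \<and>
     (\<forall>U \<phi> u. local_param M U \<phi> \<and> u \<in> U \<longrightarrow> inj (frechet_derivative (f \<circ> \<phi>) (at u)))"

definition singular_set :: "'n::euclidean_space set \<Rightarrow> ('n \<Rightarrow> 'b::euclidean_space) \<Rightarrow> 'n set" where
  "singular_set M g = {p\<in>M. \<exists>U \<phi> u. local_param M U \<phi> \<and> u \<in> U \<and> \<phi> u = p \<and>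
       dim (range (frechet_derivative (g \<circ> \<phi>) (at u))) < min 3 DIM('b)}"

definition complex_tangents :: "'n::euclidean_space set \<Rightarrow> ('n \<Rightarrow> complex^3) \<Rightarrow> 'n set" where
  "complex_tangents M F = {p\<in>M. \<exists>U \<phi> u. local_param M U \<phi> \<and> u \<in> U \<and> \<phi> u = p \<and>
       (\<exists>v. v \<noteq> 0 \<and> (\<forall>c::complex. c *s v \<in> range (frechet_derivative (F \<circ> \<phi>) (at u))))}"

definition nf_regular :: "real^3 \<Rightarrow> real^2" where
  "nf_regular u = vector [u$1, u$2]"
definition nf_def_fold :: "real^3 \<Rightarrow> real^2" where
  "nf_def_fold u = vector [u$1, (u$2)^2 + (u$3)^2]"
definition nf_indef_fold :: "real^3 \<Rightarrow> real^2" where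
  "nf_indef_fold u = vector [u$1, (u$2)^2 - (u$3)^2]"
definition nf_cusp :: "real^3 \<Rightarrow> real^2" where
  "nf_cusp u = vector [u$1, u$1 * u$2 + (u$2)^3 + (u$3)^2]"

definition has_normal_form :: "'n::euclidean_space set \<Rightarrow> ('n \<Rightarrow> real^2) \<Rightarrow> 'n \<Rightarrow> (real^3 \<Rightarrow> real^2) \<Rightarrow> bool" where
  "has_normal_form M g p nf \<longleftrightarrow> (\<exists>U \<phi> V W h. local_param M U \<phi> \<and> 0 \<in> U \<and> \<phi> 0 = p \<and>
     diffeo V W h \<and> g p \<in> V \<and> h (g p) = 0 \<and>
     (\<forall>u\<in>U. g (\<phi> u) \<in> V \<and> h (g (\<phi> u)) = nf u))"

definition cusp_points :: "'n::euclidean_space set \<Rightarrow> ('n \<Rightarrow> real^2) \<Rightarrow> 'n set" where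
  "cusp_points M g = {p\<in>M. has_normal_form M g p nf_cusp}"

definition regular_curve_in :: "'n::euclidean_space set \<Rightarrow> 'n \<Rightarrow> real \<Rightarrow> (real \<Rightarrow> 'n) \<Rightarrow> bool" where
  "regular_curve_in S p e \<gamma> \<longleftrightarrow> e > 0 \<and> smooth_on {-e<..<e} \<gamma> \<and> \<gamma> ` {-e<..<e} \<subseteq> S \<and>
     \<gamma> 0 = p \<and> vector_derivative \<gamma> (at 0) \<noteq> 0"

text \<open>g restricted to S is an immersion with normal crossings (S is 1-dimensional).\<close>
definition immersion_normal_crossings :: "'n::euclidean_space set \<Rightarrow> ('n \<Rightarrow> real^2) \<Rightarrow> bool" where
  "immersion_normal_crossings S g \<longleftrightarrow>
     (\<forall>p e \<gamma>. regular_curve_in S p e \<gamma> \<longrightarrow> vector_derivative (g \<circ> \<gamma>) (at 0) \<noteq> 0) \<and>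
     (\<forall>q. finite {p\<in>S. g p = q} \<and> card {p\<in>S. g p = q} \<le> 2) \<and>
     (\<forall>p1 p2 e1 e2 \<gamma>1 \<gamma>2. p1 \<noteq> p2 \<and> g p1 = g p2 \<and>
        regular_curve_in S p1 e1 \<gamma>1 \<and> regular_curve_in S p2 e2 \<gamma>2 \<longrightarrow>
        (let a = vector_derivative (g \<circ> \<gamma>1) (at 0); b = vector_derivative (g \<circ> \<gamma>2) (at 0)
         in a$1 * b$2 - a$2 * b$1 \<noteq> 0))"

definition stable_map :: "'n::euclidean_space set \<Rightarrow> ('n \<Rightarrow> real^2) \<Rightarrow> bool" where
  "stable_map M g \<longleftrightarrow> smooth_map M g \<and>
     (\<forall>p\<in>M. has_normal_form M g p nf_regular \<or> has_normal_form M g p nf_def_fold \<or>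
             has_normal_form M g p nf_indef_fold \<or> has_normal_form M g p nf_cusp) \<and>
     (\<forall>p\<in>cusp_points M g. {q\<in>M. g q = g p} \<inter> singular_set M g = {p}) \<and>
     immersion_normal_crossings (singular_set M g - cusp_points M g) g"

end

theory Submission
  imports Defs
begin

lemma rank_nullity:
  fixes f :: "'a::euclidean_space \<Rightarrow> 'b::euclidean_space"
  assumes lf: "linear f"
  shows "dim {x. f x = 0} + dim (range f) = DIM('a)"
proof -
  define K where "K = {x. f x = 0}"
  define Kp where "Kp = {y. \<forall>x\<in>K. orthogonal x y}"
  have sK: "subspace K" unfolding K_def by (simp add: lf linear_subspace_kernel)
  have sKp: "subspace Kp" unfolding Kp_def subspace_def orthogonal_def
    by (auto simp: inner_add_right)
  have h1: "dim Kp + dim K = DIM('a)"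
    using dim_subspace_orthogonal_to_vectors[OF sK subspace_UNIV, of] unfolding Kp_def
    by (simp add: dim_UNIV)
  have h2: "f ` Kp = range f"
  proof
    show "range f \<subseteq> f ` Kp"
    proof
      fix v assume "v \<in> range f"
      then obtain x where x: "v = f x" by auto
      obtain y z where y: "y \<in> span K" and z: "\<And>w. w \<in> span K \<Longrightarrow> orthogonal z w" and xyz: "x = y + z"
        using orthogonal_subspace_decomp_exists[of K x] by blast
      have "y \<in> K" using y sK span_eq_iff by blast
      hence "f y = 0" unfolding K_def by simp
      hence "f x = f z" using xyz linear_add[OF lf] by simp
      moreover have "z \<in> Kp" unfolding Kp_def using z span_base orthogonal_commute by blast
      ultimately show "v \<in> f ` Kp" using x by blast
    qed
  qed auto
  have inj: "inj_on f (span Kp)"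
  proof -
    have "span Kp = Kp" using sKp span_eq_iff by blast
    moreover have "inj_on f Kp"
    proof (rule inj_onI)
      fix a b assume a: "a \<in> Kp" and b: "b \<in> Kp" and e: "f a = f b"
      have "f (a - b) = 0" using e linear_diff[OF lf] by simp
      hence "a - b \<in> K" unfolding K_def by simp
      moreover have "a - b \<in> Kp" using a b sKp subspace_diff by blast
      ultimately have "orthogonal (a - b) (a - b)" unfolding Kp_def by blast
      thus "a = b" by (simp add: orthogonal_self)
    qed
    ultimately show ?thesis by (simp only:)
  qed
  have "dim (range f) = dim Kp" using dim_image_eq[OF lf inj] h2 by simp
  thus ?thesis using h1 unfolding K_def by simp
qed

lemma vector_4 [simp]:
 "(vector [x,y,z,w] ::('a::zero)^4)$1 = x"
 "(vector [x,y,z,w] ::('a::zero)^4)$2 = y"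
 "(vector [x,y,z,w] ::('a::zero)^4)$3 = z"
 "(vector [x,y,z,w] ::('a::zero)^4)$4 = w"
  unfolding vector_def by simp_all

lemma Ck_cong:
  assumes "open S" shows "Ck k S f \<Longrightarrow> (\<forall>x\<in>S. f x = g x) \<Longrightarrow> Ck k S g"
proof (induction k arbitrary: f g)
  case 0 thus ?case using continuous_on_cong by fastforce
next
  case (Suc k)
  have d: "g differentiable (at x)" if "x \<in> S" for x
  proof -
    have h: "(f has_derivative frechet_derivative f (at x)) (at x)"
      using Suc.prems that frechet_derivative_works by auto
    have "(g has_derivative frechet_derivative f (at x)) (at x)"
      using has_derivative_transform_within_open[OF h assms that, of g] Suc.prems(2) by auto
    thus ?thesis by (auto simp: differentiable_def)
  qed
  have fe: "frechet_derivative f (at x) = frechet_derivative g (at x)" if "x \<in> S" for x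
    using frechet_derivative_transform_within_open[OF _ assms that] Suc.prems that by auto
  have "Ck k S (\<lambda>x. frechet_derivative g (at x) v)" for v
  proof (rule Suc.IH)
    show "Ck k S (\<lambda>x. frechet_derivative f (at x) v)" using Suc.prems by auto
    show "\<forall>x\<in>S. frechet_derivative f (at x) v = frechet_derivative g (at x) v" using fe by auto
  qed
  thus ?case using d by auto
qed

lemma Ck_linear:
  fixes L :: "'b::real_normed_vector \<Rightarrow> 'c::real_normed_vector"
  assumes L: "bounded_linear L" and S: "open S"
  shows "Ck k S f \<Longrightarrow> Ck k S (\<lambda>x. L (f x))"
proof (induction k arbitrary: f)
  case 0 thus ?case using L by (auto intro: continuous_on_compose2 linear_continuous_on)
next
  case (Suc k)
  have hd: "((\<lambda>x. L (f x)) has_derivative (\<lambda>v. L (frechet_derivative f (at x) v))) (at x)"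
    if "x \<in> S" for x
    using has_derivative_compose[OF _ bounded_linear_imp_has_derivative[OF L]]
      Suc.prems that frechet_derivative_works by fastforce
  have fe: "frechet_derivative (\<lambda>x. L (f x)) (at x) = (\<lambda>v. L (frechet_derivative f (at x) v))"
    if "x \<in> S" for x using hd[OF that] by (simp add: frechet_derivative_at[symmetric])
  show ?case
  proof (simp, intro conjI allI ballI)
    fix x assume "x \<in> S" thus "(\<lambda>x. L (f x)) differentiable at x" using hd by (auto simp: differentiable_def)
  next
    fix v
    have "Ck k S (\<lambda>x. L (frechet_derivative f (at x) v))" using Suc by auto
    moreover have e: "\<forall>x\<in>S. L (frechet_derivative f (at x) v) = frechet_derivative (\<lambda>x. L (f x)) (at x) v"
      using fe by auto
    ultimately show "Ck k S (\<lambda>x. frechet_derivative (\<lambda>x. L (f x)) (at x) v)"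
      by (rule Ck_cong[OF S])
  qed
qed

definition Lmap :: "real^4 \<Rightarrow> complex^3" where
  "Lmap x = vector [Complex (x$1) (x$2), Complex (x$3) (x$4), Complex (x$1) (- (x$2))]"
definition Pmap :: "real^4 \<Rightarrow> real^2" where
  "Pmap x = vector [x$1, x$2]"

lemma Lmap_comp [simp]:
  "Lmap x $ 1 = Complex (x$1) (x$2)" "Lmap x $ 2 = Complex (x$3) (x$4)"
  "Lmap x $ 3 = Complex (x$1) (- (x$2))"
  by (simp_all add: Lmap_def)

lemma Pmap_comp [simp]: "Pmap x $ 1 = x$1" "Pmap x $ 2 = x$2"
  by (simp_all add: Pmap_def)

lemma linear_Lmap: "linear Lmap"
  by (rule linearI) (auto simp: vec_eq_iff forall_3 complex_eq_iff)

lemma linear_Pmap: "linear Pmap"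
  by (rule linearI) (auto simp: vec_eq_iff forall_2)

lemma inj_Lmap: "inj Lmap"
proof (rule injI)
  fix x y assume "Lmap x = Lmap y"
  hence "Lmap x $ 1 = Lmap y $ 1" "Lmap x $ 2 = Lmap y $ 2" by auto
  thus "x = y" by (auto simp: vec_eq_iff forall_4)
qed

lemma key:
  fixes D :: "real^3 \<Rightarrow> real^4"
  assumes lD: "linear D" and iD: "inj D"
  shows "(\<exists>w. w \<noteq> 0 \<and> (\<forall>c::complex. c *s w \<in> range (Lmap \<circ> D)))
         \<longleftrightarrow> dim (range (Pmap \<circ> D)) < 2"
proof -
  define f where "f = Pmap \<circ> D"
  have lf: "linear f" unfolding f_def using lD linear_Pmap by (simp add: linear_compose)
  define K where "K = {x. f x = 0}"
  have sK: "subspace K" unfolding K_def by (simp add: lf linear_subspace_kernel)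
  have rn: "dim K + dim (range f) = 3" using rank_nullity[OF lf] unfolding K_def by simp
  show ?thesis
  proof
    assume "\<exists>w. w \<noteq> 0 \<and> (\<forall>c::complex. c *s w \<in> range (Lmap \<circ> D))"
    then obtain w where w0: "w \<noteq> 0" and wc: "\<And>c::complex. c *s w \<in> range (Lmap \<circ> D)" by blast
    obtain v1 where v1: "w = Lmap (D v1)" using wc[of 1] by auto
    obtain v2 where v2: "\<i> *s w = Lmap (D v2)" using wc[of "\<i>"] by auto
    define x where "x = D v1"
    define y where "y = D v2"
    have e: "Lmap y = \<i> *s Lmap x" using v1 v2 x_def y_def by simp
    have e1: "Lmap y $ 1 = \<i> * Lmap x $ 1" "Lmap y $ 2 = \<i> * Lmap x $ 2" "Lmap y $ 3 = \<i> * Lmap x $ 3"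
      using e by auto
    hence c: "x$1 = 0" "x$2 = 0" "y$3 = - x$4" "y$4 = x$3"
      by (auto simp: complex_eq_iff)
    have nz: "x$3 \<noteq> 0 \<or> x$4 \<noteq> 0"
    proof (rule ccontr)
      assume "\<not> ?thesis"
      hence "Lmap x = 0" using c by (auto simp: vec_eq_iff forall_3 complex_eq_iff)
      thus False using w0 v1 x_def by simp
    qed
    have "v1 \<in> K" "v2 \<in> K" using c e1 unfolding K_def f_def x_def y_def
      by (auto simp: vec_eq_iff forall_2 complex_eq_iff)
    have nsp: "v2 \<notin> span {v1}"
    proof
      assume "v2 \<in> span {v1}"
      then obtain r where "v2 = r *\<^sub>R v1" by (auto simp: span_singleton)
      hence "y = r *\<^sub>R x" using linear_cmul[OF lD] x_def y_def by simp
      hence "y$3 = r * x$3" "y$4 = r * x$4" by simp_all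
      hence a: "- x$4 = r * x$3" "x$3 = r * x$4" using c by simp_all
      have "x$4 * (1 + r^2) = 0" using a by (simp add: algebra_simps power2_eq_square)
      moreover have "1 + r^2 > 0" by (simp add: add_pos_nonneg)
      ultimately have "x$4 = 0" by simp
      thus False using a nz by simp
    qed
    have v10: "v1 \<noteq> 0"
    proof
      assume "v1 = 0" hence "x = 0" using x_def linear_0[OF lD] by simp
      thus False using nz by simp
    qed
    have ind: "independent {v2, v1}"
      using nsp v10 by (simp add: independent_insert span_base)
    have "v2 \<noteq> v1" using nsp span_base by blast
    hence "card {v2, v1} = 2" by simp
    moreover have "card {v2, v1} \<le> dim K"
      using independent_card_le_dim[OF _ ind] \<open>v1 \<in> K\<close> \<open>v2 \<in> K\<close> by simp
    ultimately show "dim (range (Pmap \<circ> D)) < 2" using rn f_def by simp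
  next
    assume "dim (range (Pmap \<circ> D)) < 2"
    hence dK: "dim K \<ge> 2" using rn f_def by simp
    define e3 where "e3 = (axis 3 1 :: real^4)"
    define e4 where "e4 = (axis 4 1 :: real^4)"
    define Z where "Z = span {e3, e4}"
    have decomp: "z = z$3 *\<^sub>R e3 + z$4 *\<^sub>R e4" if "z$1 = 0" "z$2 = 0" for z :: "real^4"
      using that by (auto simp: vec_eq_iff forall_4 e3_def e4_def axis_def)
    have inZ: "a *\<^sub>R e3 + b *\<^sub>R e4 \<in> Z" for a b
      unfolding Z_def by (intro span_add span_mul span_base) auto
    have DKZ: "D ` K \<subseteq> Z"
    proof
      fix z assume "z \<in> D ` K"
      then obtain v where "v \<in> K" "z = D v" by auto
      hence "Pmap z = 0" unfolding K_def f_def by simp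
      hence "z$1 = 0" "z$2 = 0" by (metis Pmap_comp zero_index)+
      thus "z \<in> Z" using decomp inZ by metis
    qed
    have "dim (D ` K) = dim K"
      by (rule dim_image_eq[OF lD]) (use iD in \<open>auto intro: inj_on_subset\<close>)
    moreover have "dim Z \<le> 2"
    proof -
      have "dim Z \<le> card {e3, e4}" unfolding Z_def by (rule dim_le_card) auto
      also have "\<dots> \<le> 2" by (simp add: card_insert_if)
      finally show ?thesis .
    qed
    ultimately have "D ` K = Z"
      using subspace_dim_equal[OF linear_subspace_image[OF lD sK] _ DKZ] dK Z_def by simp
    define w where "w = (vector [0, 1, 0] :: complex^3)"
    have "w \<noteq> 0" unfolding w_def by (metis vector_3(2) zero_index zero_neq_one)
    moreover have "c *s w \<in> range (Lmap \<circ> D)" for c :: complex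
    proof -
      have "Re c *\<^sub>R e3 + Im c *\<^sub>R e4 \<in> D ` K" using inZ \<open>D ` K = Z\<close> by simp
      then obtain v where v: "D v = Re c *\<^sub>R e3 + Im c *\<^sub>R e4" by auto
      have "c *s w = Lmap (D v)" unfolding v w_def
        by (auto simp: vec_eq_iff forall_3 complex_eq_iff e3_def e4_def axis_def)
      thus ?thesis by simp
    qed
    ultimately show "\<exists>w. w \<noteq> 0 \<and> (\<forall>c::complex. c *s w \<in> range (Lmap \<circ> D))" by blast
  qed
qed

lemma deriv_lin:
  fixes L :: "'b::real_normed_vector \<Rightarrow> 'c::real_normed_vector"
  assumes L: "bounded_linear L" and d: "(g \<circ> \<phi>) differentiable (at u)"
  shows "frechet_derivative ((\<lambda>p. L (g p)) \<circ> \<phi>) (at u) = L \<circ> frechet_derivative (g \<circ> \<phi>) (at u)"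
proof -
  have e: "(\<lambda>p. L (g p)) \<circ> \<phi> = (\<lambda>x. L ((g \<circ> \<phi>) x))" by auto
  have "((\<lambda>x. L ((g \<circ> \<phi>) x)) has_derivative (\<lambda>v. L (frechet_derivative (g \<circ> \<phi>) (at u) v))) (at u)"
    using has_derivative_compose[OF _ bounded_linear_imp_has_derivative[OF L]]
      d frechet_derivative_works by fastforce
  thus ?thesis unfolding e by (simp add: frechet_derivative_at[symmetric] o_def)
qed

lemma smooth_lin:
  fixes L :: "'b::real_normed_vector \<Rightarrow> 'c::real_normed_vector"
  assumes L: "bounded_linear L" and s: "smooth_on U (g \<circ> \<phi>)"
  shows "smooth_on U ((\<lambda>p. L (g p)) \<circ> \<phi>)"
proof -
  have e: "(\<lambda>p. L (g p)) \<circ> \<phi> = (\<lambda>x. L ((g \<circ> \<phi>) x))" by auto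
  show ?thesis using s Ck_linear[OF L] unfolding smooth_on_def e by blast
qed

lemma smooth_diff: "smooth_on U h \<Longrightarrow> u \<in> U \<Longrightarrow> h differentiable (at u)"
  unfolding smooth_on_def using Ck.simps(2)[of 0 U h] by blast

theorem theorem3:
  fixes M :: "'n::euclidean_space set"
    and f1 f2 f3 f4 :: "'n \<Rightarrow> real"
  assumes "closed_manifold3 M"
    and "orientable3 M"
    and "stable_map M (\<lambda>p. vector [f1 p, f2 p] :: real^2)"
    and "immersion M (\<lambda>p. vector [f1 p, f2 p, f3 p, f4 p] :: real^4)"
  shows "immersion M (\<lambda>p. vector [Complex (f1 p) (f2 p), Complex (f3 p) (f4 p),
                                   Complex (f1 p) (- f2 p)] :: complex^3)
    \<and> complex_tangents M (\<lambda>p. vector [Complex (f1 p) (f2 p), Complex (f3 p) (f4 p),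
                                   Complex (f1 p) (- f2 p)] :: complex^3)
        = singular_set M (\<lambda>p. vector [f1 p, f2 p] :: real^2)"
proof -
  define gt where "gt = (\<lambda>p. vector [f1 p, f2 p, f3 p, f4 p] :: real^4)"
  have Geq: "(\<lambda>p. vector [Complex (f1 p) (f2 p), Complex (f3 p) (f4 p),
                                   Complex (f1 p) (- f2 p)] :: complex^3) = (\<lambda>p. Lmap (gt p))"
    by (auto simp: gt_def vec_eq_iff forall_3)
  have geq: "(\<lambda>p. vector [f1 p, f2 p] :: real^2) = (\<lambda>p. Pmap (gt p))"
    by (auto simp: gt_def vec_eq_iff forall_2)
  have imm: "immersion M gt" using assms(4) unfolding gt_def .
  have bL: "bounded_linear Lmap" using linear_Lmap linear_conv_bounded_linear by blast
  have bP: "bounded_linear Pmap" using linear_Pmap linear_conv_bounded_linear by blast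
  have sm: "smooth_on U (gt \<circ> \<phi>)" if "local_param M U \<phi>" for U \<phi>
    using imm that unfolding immersion_def smooth_map_def by blast
  have dif: "(gt \<circ> \<phi>) differentiable (at u)" if "local_param M U \<phi>" "u \<in> U" for U \<phi> u
    using smooth_diff[OF sm[OF that(1)] that(2)] .
  have injD: "inj (frechet_derivative (gt \<circ> \<phi>) (at u))" if "local_param M U \<phi>" "u \<in> U" for U \<phi> u
    using imm that unfolding immersion_def by blast
  have linD: "linear (frechet_derivative (gt \<circ> \<phi>) (at u))" if "local_param M U \<phi>" "u \<in> U" for U \<phi> u
    using dif[OF that] frechet_derivative_works has_derivative_linear by blast
  have part1: "immersion M (\<lambda>p. Lmap (gt p))"
    unfolding immersion_def smooth_map_def
  proof (intro conjI allI impI)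
    fix U \<phi> assume "local_param M U \<phi>"
    thus "smooth_on U ((\<lambda>p. Lmap (gt p)) \<circ> \<phi>)" using smooth_lin[OF bL sm] by blast
  next
    fix U \<phi> u assume a: "local_param M U \<phi> \<and> u \<in> U"
    thus "inj (frechet_derivative ((\<lambda>p. Lmap (gt p)) \<circ> \<phi>) (at u))"
      using deriv_lin[OF bL dif] injD inj_Lmap inj_compose by metis
  qed
  have eqv: "(\<exists>v. v \<noteq> 0 \<and> (\<forall>c::complex. c *s v \<in> range (frechet_derivative ((\<lambda>p. Lmap (gt p)) \<circ> \<phi>) (at u))))
     \<longleftrightarrow> dim (range (frechet_derivative ((\<lambda>p. Pmap (gt p)) \<circ> \<phi>) (at u))) < min 3 DIM(real^2)"
    if "local_param M U \<phi>" "u \<in> U" for U \<phi> u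
    using key[OF linD[OF that] injD[OF that]] deriv_lin[OF bL dif[OF that]] deriv_lin[OF bP dif[OF that]]
    by simp
  have part2: "complex_tangents M (\<lambda>p. Lmap (gt p)) = singular_set M (\<lambda>p. Pmap (gt p))"
    unfolding complex_tangents_def singular_set_def
  proof (rule Collect_cong, rule conj_cong[OF refl])
    fix p show "(\<exists>U \<phi> u. local_param M U \<phi> \<and> u \<in> U \<and> \<phi> u = p \<and>
       (\<exists>v. v \<noteq> 0 \<and> (\<forall>c::complex. c *s v \<in> range (frechet_derivative ((\<lambda>p. Lmap (gt p)) \<circ> \<phi>) (at u)))))
      \<longleftrightarrow> (\<exists>U \<phi> u. local_param M U \<phi> \<and> u \<in> U \<and> \<phi> u = p \<and>
       dim (range (frechet_derivative ((\<lambda>p. Pmap (gt p)) \<circ> \<phi>) (at u))) < min 3 DIM(real^2))"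
    proof
      assume "\<exists>U \<phi> u. local_param M U \<phi> \<and> u \<in> U \<and> \<phi> u = p \<and>
       (\<exists>v. v \<noteq> 0 \<and> (\<forall>c::complex. c *s v \<in> range (frechet_derivative ((\<lambda>p. Lmap (gt p)) \<circ> \<phi>) (at u))))"
      then obtain U \<phi> u where h: "local_param M U \<phi>" "u \<in> U" "\<phi> u = p"
        and c: "\<exists>v. v \<noteq> 0 \<and> (\<forall>c::complex. c *s v \<in> range (frechet_derivative ((\<lambda>p. Lmap (gt p)) \<circ> \<phi>) (at u)))"
        by blast
      show "\<exists>U \<phi> u. local_param M U \<phi> \<and> u \<in> U \<and> \<phi> u = p \<and>
       dim (range (frechet_derivative ((\<lambda>p. Pmap (gt p)) \<circ> \<phi>) (at u))) < min 3 DIM(real^2)"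
        using h c eqv[OF h(1,2)] by blast
    next
      assume "\<exists>U \<phi> u. local_param M U \<phi> \<and> u \<in> U \<and> \<phi> u = p \<and>
       dim (range (frechet_derivative ((\<lambda>p. Pmap (gt p)) \<circ> \<phi>) (at u))) < min 3 DIM(real^2)"
      then obtain U \<phi> u where h: "local_param M U \<phi>" "u \<in> U" "\<phi> u = p"
        and c: "dim (range (frechet_derivative ((\<lambda>p. Pmap (gt p)) \<circ> \<phi>) (at u))) < min 3 DIM(real^2)"
        by blast
      show "\<exists>U \<phi> u. local_param M U \<phi> \<and> u \<in> U \<and> \<phi> u = p \<and>
       (\<exists>v. v \<noteq> 0 \<and> (\<forall>c::complex. c *s v \<in> range (frechet_derivative ((\<lambda>p. Lmap (gt p)) \<circ> \<phi>) (at u))))"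
        using h c eqv[OF h(1,2)] by blast
    qed
  qed
  show ?thesis unfolding Geq geq using part1 part2 by simp
qed

end
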